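(* Let $n\ge4$, $x_1,\dots,x_{n-1}>0$, $\gamma,\delta>0$ with $\gamma\ne1\ne\delta$, $x_0=1$, and let $\mathbf{P}$ be the $n\times n$ matrix with entries $p_{ij}=x_{j-1}/x_{i-1}$ except $p_{12}=\delta x_1$, $p_{21}=1/(\delta x_1)$, $p_{13}=\gamma x_2$, $p_{31}=1/(\gamma x_2)$. Let $\mathbf{w}^{EM}$ be the principal right eigenvector of $\mathbf{P}$. If $\delta<1$ and $\delta\le\gamma$, then $w_1^{EM}/w_2^{EM}>\delta x_1$.
   Context: The principal right eigenvector is the positive (Perron) eigenvector belonging to the largest eigenvalue. *)

theory Defs
  imports "Jordan_Normal_Form.Char_Poly"
begin

definition principal_right_eigenvector :: "real mat \<Rightarrow> real vec \<Rightarrow> bool" where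
  "principal_right_eigenvector A w \<longleftrightarrow>
     (\<forall>i<dim_vec w. w $ i > 0) \<and>
     (\<exists>lam. eigenvector A w lam \<and>
        (\<forall>mu. eigenvalue (map_mat complex_of_real A) mu \<longrightarrow> cmod mu \<le> lam))"

text \<open>The perturbed consistent matrix, 0-based indices (paper index k is k-1 here).
x 0 is intended to be 1.\<close>
definition pert_matrix :: "nat \<Rightarrow> (nat \<Rightarrow> real) \<Rightarrow> real \<Rightarrow> real \<Rightarrow> real mat" where
  "pert_matrix n x gam del = mat n n (\<lambda>(i,j).
     if (i,j) = (0,1) then del * x 1
     else if (i,j) = (1,0) then 1 / (del * x 1)
     else if (i,j) = (0,2) then gam * x 2
     else if (i,j) = (2,0) then 1 / (gam * x 2)
     else x j / x i)"

end

theory Submission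
  imports Defs
begin

lemma sum_split3:
  fixes f :: "nat \<Rightarrow> real"
  assumes "n \<ge> 4"
  shows "(\<Sum>j<n. f j) = f 0 + f 1 + f 2 + (\<Sum>j\<in>{3..<n}. f j)"
proof -
  have "{..<n} = {0,1,2} \<union> {3..<n}" using assms by auto
  then show ?thesis by (simp add: sum.union_disjoint)
qed

theorem mainTheorem6:
  fixes n :: nat and x :: "nat \<Rightarrow> real" and gam del :: real and w :: "real vec"
  assumes "n \<ge> 4"
    and "x 0 = 1"
    and "\<forall>i. 1 \<le> i \<and> i \<le> n - 1 \<longrightarrow> x i > 0"
    and "gam > 0" and "del > 0" and "gam \<noteq> 1" and "del \<noteq> 1"
    and "principal_right_eigenvector (pert_matrix n x gam del) w"
    and "del < 1" and "del \<le> gam"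
  shows "w $ 0 / w $ 1 > del * x 1"
proof -
  let ?A = "pert_matrix n x gam del"
  from assms(8) obtain lam where pos: "\<forall>i<dim_vec w. w $ i > 0" and ev: "eigenvector ?A w lam"
    unfolding principal_right_eigenvector_def by blast
  have dimA: "dim_row ?A = n" "dim_col ?A = n" unfolding pert_matrix_def by auto
  from ev have wc: "dim_vec w = n" and eq: "?A *\<^sub>v w = lam \<cdot>\<^sub>v w"
    unfolding eigenvector_def using dimA by auto
  have wp: "\<And>i. i < n \<Longrightarrow> w $ i > 0" using pos wc by auto
  have xp: "\<And>i. 1 \<le> i \<Longrightarrow> i < n \<Longrightarrow> x i > 0" using assms(3) by auto
  have x1: "x 1 > 0" and x2: "x 2 > 0" using xp assms(1) by auto
  have w0: "w $ 0 > 0" and w1: "w $ 1 > 0" and w2: "w $ 2 > 0" using wp assms(1) by auto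
  define T where "T = (\<Sum>j\<in>{3..<n}. x j * w $ j)"
  have Tpos: "T > 0" unfolding T_def
  proof (rule sum_pos)
    show "finite {3..<n}" by simp
    show "{3..<n} \<noteq> {}" using assms(1) by auto
    fix j assume "j \<in> {3..<n}"
    then show "0 < x j * w $ j" using xp wp by auto
  qed
  have row: "\<And>i. i < n \<Longrightarrow> (?A *\<^sub>v w) $ i = (\<Sum>j<n. ?A $$ (i,j) * w $ j)"
    using dimA wc by (simp add: mult_mat_vec_def scalar_prod_def lessThan_atLeast0 mult.commute)
  have ent: "\<And>i j. i < n \<Longrightarrow> j < n \<Longrightarrow> ?A $$ (i,j) = (if (i,j) = (0,1) then del * x 1
     else if (i,j) = (1,0) then 1 / (del * x 1)
     else if (i,j) = (0,2) then gam * x 2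
     else if (i,j) = (2,0) then 1 / (gam * x 2)
     else x j / x i)" unfolding pert_matrix_def by simp
  have r0: "lam * w $ 0 = w $ 0 + del * x 1 * w $ 1 + gam * x 2 * w $ 2 + T"
  proof -
    have "lam * w $ 0 = (?A *\<^sub>v w) $ 0" using eq wc assms(1) by simp
    also have "\<dots> = (\<Sum>j<n. ?A $$ (0,j) * w $ j)" using row assms(1) by simp
    also have "\<dots> = w $ 0 + del * x 1 * w $ 1 + gam * x 2 * w $ 2 + T"
      unfolding sum_split3[OF assms(1)] T_def using assms(1,2) ent
      by (auto intro!: sum.cong)
    finally show ?thesis .
  qed
  have r1: "lam * w $ 1 = w $ 0 / (del * x 1) + w $ 1 + x 2 / x 1 * w $ 2 + T / x 1"
  proof -
    have "lam * w $ 1 = (?A *\<^sub>v w) $ 1" using eq wc assms(1) by simp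
    also have "\<dots> = (\<Sum>j<n. ?A $$ (1,j) * w $ j)" using row assms(1) by simp
    also have "\<dots> = w $ 0 / (del * x 1) + w $ 1 + x 2 / x 1 * w $ 2 + (\<Sum>j\<in>{3..<n}. x j / x 1 * w $ j)"
      unfolding sum_split3[OF assms(1)] using assms(1,2) ent x1
      by (auto intro!: sum.cong)
    also have "(\<Sum>j\<in>{3..<n}. x j / x 1 * w $ j) = T / x 1"
      unfolding T_def sum_divide_distrib by (auto intro!: sum.cong)
    finally show ?thesis .
  qed
  have d: "lam * (w $ 0 - del * x 1 * w $ 1) = (gam - del) * x 2 * w $ 2 + (1 - del) * T"
  proof -
    have "del * x 1 * (lam * w $ 1) = w $ 0 + del * x 1 * w $ 1 + del * x 2 * w $ 2 + del * T"
      unfolding r1 using x1 assms(5) by (simp add: field_simps)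
    then show ?thesis using r0 by (simp add: algebra_simps)
  qed
  have "(gam - del) * x 2 * w $ 2 \<ge> 0" using assms(10) x2 w2 by simp
  moreover have "(1 - del) * T > 0" using assms(9) Tpos by simp
  ultimately have dp: "lam * (w $ 0 - del * x 1 * w $ 1) > 0" using d by linarith
  have "lam * w $ 0 > 0" using r0 w0 w1 w2 x1 x2 Tpos assms(4,5) by (simp add: add_pos_pos)
  then have "lam > 0" using w0 by (simp add: zero_less_mult_iff)
  then have "w $ 0 - del * x 1 * w $ 1 > 0" using dp by (simp add: zero_less_mult_iff)
  then show ?thesis using w1 by (simp add: field_simps)
qed

end
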